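(* Given a set of $n$ distinct elements from a totally ordered universe (accessible only through pairwise comparisons) and integers $i,j\ge 1$ with $i+j+2(i+j)^{3/4}\le n$, there is a randomized comparison-based algorithm that always outputs an $(i,j)$-mediocre element and whose expected number of comparisons is $(i+j)+O\big((i+j)^{3/4}\big)$ as $i+j\to\infty$.
   Context: For nonnegative integers $i,j$, an element of a totally ordered set $S$ of $n$ elements is called $(i,j)$-mediocre if it is neither among the $i$ largest nor among the $j$ smallest elements of $S$. The expectation is over the algorithm's internal randomness, for the worst-case input. *)

theory Defs
  imports "HOL-Probability.Probability"
begin

text \<open>The input consists of n elements indexed 0..n-1; the total order
 on them is given by a rank permutation p of {..<n} (element k has rank p k). A randomized algorithm is a probability distribution
 over decision trees (its internal randomness).\<close>

datatype dtree = Leaf nat | Cmp nat nat dtree dtree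

fun run :: "dtree \<Rightarrow> (nat \<Rightarrow> nat) \<Rightarrow> nat" where
  "run (Leaf k) p = k"
| "run (Cmp a b l r) p = (if p a < p b then run l p else run r p)"

fun cost :: "dtree \<Rightarrow> (nat \<Rightarrow> nat) \<Rightarrow> nat" where
  "cost (Leaf k) p = 0"
| "cost (Cmp a b l r) p = Suc (if p a < p b then cost l p else cost r p)"

fun wf_tree :: "nat \<Rightarrow> dtree \<Rightarrow> bool" where
  "wf_tree n (Leaf k) = (k < n)"
| "wf_tree n (Cmp a b l r) = (a < n \<and> b < n \<and> wf_tree n l \<and> wf_tree n r)"

definition mediocre :: "nat \<Rightarrow> nat \<Rightarrow> 'a::linorder set \<Rightarrow> 'a \<Rightarrow> bool" where
  "mediocre i j S x \<longleftrightarrow> x \<in> S \<and> i \<le> card {y\<in>S. x < y} \<and> j \<le> card {y\<in>S. y < x}"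

end

theory Submission
  imports Defs "HOL-Probability.Probability" "HOL-Real_Asymp.Real_Asymp"
begin


datatype 'a prog = Ret 'a | Ask nat nat "'a prog" "'a prog"

fun bindp :: "'a prog \<Rightarrow> ('a \<Rightarrow> 'b prog) \<Rightarrow> 'b prog" where
  "bindp (Ret x) f = f x"
| "bindp (Ask a b l r) f = Ask a b (bindp l f) (bindp r f)"

fun evalp :: "'a prog \<Rightarrow> (nat \<Rightarrow> nat) \<Rightarrow> 'a" where
  "evalp (Ret x) p = x"
| "evalp (Ask a b l r) p = (if p a < p b then evalp l p else evalp r p)"

fun costp :: "'a prog \<Rightarrow> (nat \<Rightarrow> nat) \<Rightarrow> nat" where
  "costp (Ret x) p = 0"
| "costp (Ask a b l r) p = Suc (if p a < p b then costp l p else costp r p)"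

fun okp :: "nat \<Rightarrow> ('a \<Rightarrow> bool) \<Rightarrow> 'a prog \<Rightarrow> bool" where
  "okp n Q (Ret x) = Q x"
| "okp n Q (Ask a b l r) = (a < n \<and> b < n \<and> okp n Q l \<and> okp n Q r)"

fun todt :: "nat prog \<Rightarrow> dtree" where
  "todt (Ret x) = Leaf x"
| "todt (Ask a b l r) = Cmp a b (todt l) (todt r)"

lemma evalp_bind[simp]: "evalp (bindp m f) p = evalp (f (evalp m p)) p"
  by (induction m) auto

lemma costp_bind[simp]: "costp (bindp m f) p = costp m p + costp (f (evalp m p)) p"
  by (induction m) auto

lemma okp_bind: "okp n Q m \<Longrightarrow> (\<And>x. Q x \<Longrightarrow> okp n R (f x)) \<Longrightarrow> okp n R (bindp m f)"
  by (induction m) auto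

lemma okp_mono: "okp n Q m \<Longrightarrow> (\<And>x. Q x \<Longrightarrow> R x) \<Longrightarrow> okp n R m"
  by (induction m) auto

lemma run_todt[simp]: "run (todt m) p = evalp m p"
  by (induction m) auto

lemma cost_todt[simp]: "cost (todt m) p = costp m p"
  by (induction m) auto

lemma wf_todt: "okp n (\<lambda>v. v < n) m \<Longrightarrow> wf_tree n (todt m)"
  by (induction m) auto

definition mapp :: "('a \<Rightarrow> 'b) \<Rightarrow> 'a prog \<Rightarrow> 'b prog" where
  "mapp f m = bindp m (\<lambda>x. Ret (f x))"

lemma evalp_mapp[simp]: "evalp (mapp f m) p = f (evalp m p)"
  and costp_mapp[simp]: "costp (mapp f m) p = costp m p"
  by (simp_all add: mapp_def)

lemma okp_mapp: "okp n Q m \<Longrightarrow> (\<And>x. Q x \<Longrightarrow> R (f x)) \<Longrightarrow> okp n R (mapp f m)"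
  unfolding mapp_def by (erule okp_bind) simp

fun clog :: "nat \<Rightarrow> nat" where
  "clog L = (if L = 0 then 0 else Suc (clog (L div 2)))"

declare clog.simps[simp del]

lemma clog_mono: "a \<le> b \<Longrightarrow> clog a \<le> clog b"
proof (induction b arbitrary: a rule: less_induct)
  case (less b)
  show ?case
  proof (cases "a = 0")
    case True then show ?thesis by (simp add: clog.simps)
  next
    case False
    then have "b \<noteq> 0" using less by auto
    have "clog (a div 2) \<le> clog (b div 2)"
      using less False by (intro less.IH) (auto intro: div_le_mono)
    then show ?thesis using False \<open>b \<noteq> 0\<close> by (subst (1 2) clog.simps) simp
  qed
qed

function bins :: "nat \<Rightarrow> nat list \<Rightarrow> nat list prog" where
  "bins x ys = (if ys = [] then Ret [x] else
     Ask x (ys ! (length ys div 2))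
       (mapp (\<lambda>r. r @ drop (length ys div 2) ys) (bins x (take (length ys div 2) ys)))
       (mapp (\<lambda>r. take (Suc (length ys div 2)) ys @ r) (bins x (drop (Suc (length ys div 2)) ys))))"
  by auto
termination by (relation "Wellfounded.measure (\<lambda>(x,ys). length ys)") auto

declare bins.simps[simp del]

abbreviation sortedp :: "(nat \<Rightarrow> nat) \<Rightarrow> nat list \<Rightarrow> bool" where
  "sortedp p ys \<equiv> sorted_wrt (\<lambda>a b. p a \<le> p b) ys"

lemma bins_eval:
  "sortedp p ys \<Longrightarrow> sortedp p (evalp (bins x ys) p) \<and> mset (evalp (bins x ys) p) = add_mset x (mset ys)"
proof (induction x ys rule: bins.induct)
  case (1 x ys)
  show ?case
  proof (cases "ys = []")
    case True then show ?thesis by (simp add: bins.simps)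
  next
    case False
    define h where "h = length ys div 2"
    have hl: "h < length ys" using False by (simp add: h_def)
    have ys: "ys = take h ys @ ys ! h # drop (Suc h) ys" using hl by (simp add: id_take_nth_drop)
    have dh: "drop h ys = ys ! h # drop (Suc h) ys" using hl by (simp add: Cons_nth_drop_Suc)
    have th: "take (Suc h) ys = take h ys @ [ys ! h]" using hl by (simp add: take_Suc_conv_app_nth)
    have s1: "sortedp p (take h ys)" "sortedp p (drop (Suc h) ys)" "sortedp p (drop h ys)" "sortedp p (take (Suc h) ys)"
      using "1.prems" by (auto intro: sorted_wrt_take sorted_wrt_drop)
    have cross: "\<forall>a\<in>set (take h ys). \<forall>b\<in>set (drop h ys). p a \<le> p b"
      using "1.prems" by (metis append_take_drop_id sorted_wrt_append)
    have cross2: "\<forall>a\<in>set (take (Suc h) ys). \<forall>b\<in>set (drop (Suc h) ys). p a \<le> p b"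
      using "1.prems" by (metis append_take_drop_id sorted_wrt_append)
    have hd1: "\<forall>b\<in>set (drop h ys). p (ys ! h) \<le> p b"
      using s1(3) unfolding dh by auto
    have hd2: "\<forall>a\<in>set (take (Suc h) ys). p a \<le> p (ys ! h)"
      using s1(4) unfolding th by (auto simp: sorted_wrt_append)
    show ?thesis
    proof (cases "p x < p (ys ! h)")
      case True
      define r where "r = evalp (bins x (take h ys)) p"
      have IH: "sortedp p r \<and> mset r = add_mset x (mset (take h ys))"
        using "1.IH"(1)[OF False] s1(1) unfolding r_def h_def by simp
      then have sr: "set r = insert x (set (take h ys))" by (metis set_mset_mset set_mset_add_mset_insert)
      have "evalp (bins x ys) p = r @ drop h ys"
        using False True by (subst bins.simps) (simp add: r_def h_def)
      moreover have "sortedp p (r @ drop h ys)"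
        unfolding sorted_wrt_append using IH s1(3) cross hd1 True sr by force
      moreover have "mset (r @ drop h ys) = add_mset x (mset ys)"
        using IH by (metis append_take_drop_id mset_append union_mset_add_mset_left)
      ultimately show ?thesis by simp
    next
      case False2: False
      define r where "r = evalp (bins x (drop (Suc h) ys)) p"
      have IH: "sortedp p r \<and> mset r = add_mset x (mset (drop (Suc h) ys))"
        using "1.IH"(2)[OF False] s1(2) unfolding r_def h_def by simp
      then have sr: "set r = insert x (set (drop (Suc h) ys))" by (metis set_mset_mset set_mset_add_mset_insert)
      have "evalp (bins x ys) p = take (Suc h) ys @ r"
        using False False2 by (subst bins.simps) (simp add: r_def h_def)
      moreover have "sortedp p (take (Suc h) ys @ r)"
        unfolding sorted_wrt_append using IH s1(4) cross2 hd2 False2 sr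
        by (metis insert_iff le_trans not_less)
      moreover have "mset (take (Suc h) ys @ r) = add_mset x (mset ys)"
        using IH by (metis append_take_drop_id mset_append union_mset_add_mset_right)
      ultimately show ?thesis by simp
    qed
  qed
qed

lemma bins_cost: "costp (bins x ys) p \<le> clog (length ys)"
proof (induction x ys rule: bins.induct)
  case (1 x ys)
  show ?case
  proof (cases "ys = []")
    case True then show ?thesis by (simp add: bins.simps)
  next
    case False
    define h where "h = length ys div 2"
    have a: "costp (bins x (take h ys)) p \<le> clog (length ys div 2)"
      using "1.IH"(1)[OF False] False unfolding h_def
      by (metis length_take min.absorb4 length_greater_0_conv div_less_dividend zero_less_numeral one_less_numeral_iff semiring_norm(76))
    have b: "costp (bins x (drop (Suc h) ys)) p \<le> clog (length ys div 2)"
      proof -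
      have b0: "length ys - Suc (length ys div 2) \<le> length ys div 2" by presburger
      show ?thesis
        using "1.IH"(2)[OF False] clog_mono[OF b0] unfolding h_def by simp
    qed
    have c: "clog (length ys) = Suc (clog (length ys div 2))" using False by (simp add: clog.simps)
    show ?thesis using a b False unfolding c by (subst bins.simps) (simp add: h_def)
  qed
qed

lemma bins_ok: "x < n \<Longrightarrow> set ys \<subseteq> {..<n} \<Longrightarrow> okp n (\<lambda>r. mset r = add_mset x (mset ys)) (bins x ys)"
proof (induction x ys rule: bins.induct)
  case (1 x ys)
  show ?case
  proof (cases "ys = []")
    case True then show ?thesis by (simp add: bins.simps)
  next
    case False
    define h where "h = length ys div 2"
    have hl: "h < length ys" using False by (simp add: h_def)
    have A: "okp n (\<lambda>r. mset r = add_mset x (mset (take h ys))) (bins x (take h ys))"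
      using "1.IH"(1)[OF False] "1.prems" unfolding h_def by (meson order_trans set_take_subset)
    have B: "okp n (\<lambda>r. mset r = add_mset x (mset (drop (Suc h) ys))) (bins x (drop (Suc h) ys))"
      using "1.IH"(2)[OF False] "1.prems" unfolding h_def by (meson order_trans set_drop_subset)
    have yh: "ys ! h < n" using hl "1.prems" by (meson lessThan_iff nth_mem subsetD)
    show ?thesis
      apply (subst bins.simps)
      using False "1.prems" yh
      apply (simp add: h_def[symmetric])
      apply (intro conjI)
       apply (rule okp_mapp[OF A]) apply (metis append_take_drop_id mset_append union_mset_add_mset_left)
      apply (rule okp_mapp[OF B]) apply (metis append_take_drop_id mset_append union_mset_add_mset_right)
      done
  qed
qed

primrec isort :: "nat list \<Rightarrow> nat list prog" where
  "isort [] = Ret []"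
| "isort (x # xs) = bindp (isort xs) (bins x)"

lemma isort_eval: "sortedp p (evalp (isort xs) p) \<and> mset (evalp (isort xs) p) = mset xs"
  by (induction xs) (auto dest: bins_eval)

lemma isort_length: "length (evalp (isort xs) p) = length xs"
  by (metis isort_eval size_mset)

lemma isort_cost: "costp (isort xs) p \<le> length xs * clog (length xs)"
proof (induction xs)
  case Nil then show ?case by simp
next
  case (Cons x xs)
  have "costp (bins x (evalp (isort xs) p)) p \<le> clog (length xs)"
    using bins_cost[of x "evalp (isort xs) p" p] by (simp add: isort_length)
  also have "\<dots> \<le> clog (Suc (length xs))" by (rule clog_mono) simp
  finally have 1: "costp (bins x (evalp (isort xs) p)) p \<le> clog (Suc (length xs))" .
  have 2: "length xs * clog (length xs) \<le> length xs * clog (Suc (length xs))"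
    by (intro mult_le_mono2 clog_mono) simp
  have 3: "costp (isort (x#xs)) p = costp (isort xs) p + costp (bins x (evalp (isort xs) p)) p" by simp
  have 4: "Suc (length xs) * clog (Suc (length xs)) = clog (Suc (length xs)) + length xs * clog (Suc (length xs))" by simp
  show ?case unfolding 3 length_Cons 4 using Cons.IH 1 2 by linarith
qed

lemma isort_ok: "set xs \<subseteq> {..<n} \<Longrightarrow> okp n (\<lambda>r. mset r = mset xs) (isort xs)"
proof (induction xs)
  case Nil then show ?case by simp
next
  case (Cons x xs)
  show ?case
    apply simp
    apply (rule okp_bind[OF Cons.IH])
    using Cons.prems apply simp
    apply (rule okp_mono[OF bins_ok])
    using Cons.prems apply simp
    using Cons.prems apply (metis insert_subset list.simps(15) set_mset_mset)
    apply simp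
    done
qed

primrec cnt :: "nat \<Rightarrow> nat list \<Rightarrow> nat prog" where
  "cnt x [] = Ret 0"
| "cnt x (y # ys) = Ask y x (mapp Suc (cnt x ys)) (cnt x ys)"

lemma cnt_eval: "evalp (cnt x ys) p = length (filter (\<lambda>y. p y < p x) ys)"
  by (induction ys) auto

lemma cnt_cost: "costp (cnt x ys) p = length ys"
  by (induction ys) auto

lemma cnt_ok: "x < n \<Longrightarrow> set ys \<subseteq> {..<n} \<Longrightarrow> okp n (\<lambda>_. True) (cnt x ys)"
  by (induction ys) (auto intro: okp_mapp)



definition below :: "(nat \<Rightarrow> nat) \<Rightarrow> nat \<Rightarrow> nat \<Rightarrow> nat" where
  "below p m x = card {y. y < m \<and> p y < p x}"
definition above :: "(nat \<Rightarrow> nat) \<Rightarrow> nat \<Rightarrow> nat \<Rightarrow> nat" where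
  "above p m x = card {y. y < m \<and> p x < p y}"

lemma good:
  assumes bij: "bij_betw p {..<n} {..<n}" and x: "x < m" and mn: "m \<le> n"
    and j: "j \<le> below p m x" and i: "i \<le> above p m x"
  shows "mediocre i j (p ` {..<n}) (p x)"
proof -
  have img: "p ` {..<n} = {..<n}" using bij by (simp add: bij_betw_def)
  have inj: "inj_on p {..<m}" using bij mn by (meson bij_betw_def inj_on_subset lessThan_subset_iff)
  have pxn: "p x < n" using bij x mn by (metis bij_betw_apply lessThan_iff order_less_le_trans)
  have pn: "\<And>y. y < m \<Longrightarrow> p y < n" using bij mn by (meson bij_betw_apply lessThan_iff order_less_le_trans)
  have sub1: "p ` {y. y < m \<and> p x < p y} \<subseteq> {y \<in> {..<n}. p x < y}"
    using pn by auto
  have sub2: "p ` {y. y < m \<and> p y < p x} \<subseteq> {y \<in> {..<n}. y < p x}"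
    using pn by auto
  have "above p m x = card (p ` {y. y < m \<and> p x < p y})"
    unfolding above_def by (rule card_image[symmetric]) (rule inj_on_subset[OF inj], auto)
  also have "\<dots> \<le> card {y \<in> {..<n}. p x < y}" by (rule card_mono[OF _ sub1]) simp
  finally have A: "i \<le> card {y \<in> {..<n}. p x < y}" using i by simp
  have "below p m x = card (p ` {y. y < m \<and> p y < p x})"
    unfolding below_def by (rule card_image[symmetric]) (rule inj_on_subset[OF inj], auto)
  also have "\<dots> \<le> card {y \<in> {..<n}. y < p x}" by (rule card_mono[OF _ sub2]) simp
  finally have B: "j \<le> card {y \<in> {..<n}. y < p x}" using j by simp
  show ?thesis unfolding mediocre_def img using A B pxn by simp
qed

lemma below_above:
  assumes inj: "inj_on p {..<m}" and x: "x < m"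
  shows "below p m x + above p m x = m - 1"
proof -
  have "{..<m} - {x} = {y. y < m \<and> p y < p x} \<union> {y. y < m \<and> p x < p y}"
    using inj x by (auto simp: inj_on_def) (metis lessThan_iff linorder_neqE_nat)
  moreover have "{y. y < m \<and> p y < p x} \<inter> {y. y < m \<and> p x < p y} = {}" by auto
  ultimately have "card ({..<m} - {x}) = below p m x + above p m x"
    unfolding below_def above_def by (simp add: card_Un_disjoint)
  then show ?thesis using x by simp
qed

lemma sorted_rank:
  assumes d: "distinct L" and s: "sortedp p L" and inj: "inj_on p (set L)" and sL: "set L = {..<m}"
    and r: "r < length L"
  shows "r \<le> below p m (L ! r) \<and> length L - Suc r \<le> above p m (L ! r)"
proof -
  have lt: "p (L ! a) < p (L ! b)" if "a < b" "b < length L" for a b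
  proof -
    have le: "p (L ! a) \<le> p (L ! b)" using s that by (simp add: sorted_wrt_iff_nth_less)
    have ne: "L ! a \<noteq> L ! b" using d that by (simp add: nth_eq_iff_index_eq)
    have "L ! a \<in> set L" "L ! b \<in> set L" using that by simp_all
    then have "p (L ! a) \<noteq> p (L ! b)" using inj_on_eq_iff[OF inj] ne by blast
    then show ?thesis using le by simp
  qed
  have 1: "set (take r L) \<subseteq> {y. y < m \<and> p y < p (L ! r)}"
  proof
    fix y assume "y \<in> set (take r L)"
    then have ym: "y < m" using sL by (metis in_set_takeD lessThan_iff)
    from \<open>y \<in> set (take r L)\<close> obtain a where a: "a < r" "y = L ! a" using r by (auto simp: in_set_conv_nth)
    have "p y < p (L ! r)" using lt[OF a(1) r] a(2) by simp
    then show "y \<in> {y. y < m \<and> p y < p (L ! r)}" using ym by simp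
  qed
  have 2: "set (drop (Suc r) L) \<subseteq> {y. y < m \<and> p (L ! r) < p y}"
  proof
    fix y assume "y \<in> set (drop (Suc r) L)"
    then obtain a where a: "a < length L - Suc r" "y = L ! (Suc r + a)" by (auto simp: in_set_conv_nth)
    then have a2: "Suc r + a < length L" by simp
    have "y \<in> set L" using a(2) a2 by simp
    then have ym: "y < m" using sL by simp
    have "p (L ! r) < p y" using lt[of r "Suc r + a", OF _ a2] a(2) by simp
    then show "y \<in> {y. y < m \<and> p (L ! r) < p y}" using ym by simp
  qed
  have "r = card (set (take r L))" using d r by (simp add: distinct_card)
  also have "\<dots> \<le> below p m (L ! r)" unfolding below_def by (rule card_mono[OF _ 1]) simp
  finally have A: "r \<le> below p m (L ! r)" .
  have "length L - Suc r = card (set (drop (Suc r) L))" using d by (simp add: distinct_card)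
  also have "\<dots> \<le> above p m (L ! r)" unfolding above_def by (rule card_mono[OF _ 2]) simp
  finally show ?thesis using A by simp
qed

lemma card_low:
  fixes f :: "nat \<Rightarrow> 'b::linorder"
  assumes fin: "finite S" and inj: "inj_on f S"
  shows "card {y \<in> S. card {z \<in> S. f z < f y} < j} \<le> j"
proof (rule ccontr)
  define B where "B = {y \<in> S. card {z \<in> S. f z < f y} < j}"
  assume "\<not> card {y \<in> S. card {z \<in> S. f z < f y} < j} \<le> j"
  then have cB: "card B > j" unfolding B_def by simp
  have finB: "finite B" using fin unfolding B_def by simp
  have neB: "B \<noteq> {}" using cB by auto
  obtain y where y: "y \<in> B" "f y = Max (f ` B)"
    using Max_in[of "f ` B"] finB neB by (metis (no_types, lifting) finite_imageI image_iff image_is_empty)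
  have "B - {y} \<subseteq> {z \<in> S. f z < f y}"
  proof
    fix z assume z: "z \<in> B - {y}"
    then have "f z \<le> f y" using y finB by simp
    moreover have "f z \<noteq> f y" using z y inj unfolding B_def by (auto simp: inj_on_def)
    ultimately show "z \<in> {z \<in> S. f z < f y}" using z unfolding B_def by auto
  qed
  then have "card (B - {y}) \<le> card {z \<in> S. f z < f y}" by (intro card_mono) (use fin in auto)
  moreover have "card (B - {y}) = card B - 1" using y finB by simp
  moreover have "card {z \<in> S. f z < f y} < j" using y unfolding B_def by simp
  ultimately show False using cB by linarith
qed

lemma card_lowP:
  assumes inj: "inj_on p {..<m}"
  shows "card {y \<in> {..<m}. below p m y < j} \<le> j"
  using card_low[OF _ inj, of j] unfolding below_def by (simp add: conj_commute)

lemma card_highP: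
  assumes inj: "inj_on p {..<m}"
  shows "card {y \<in> {..<m}. above p m y < i} \<le> i"
proof -
  have inj': "inj_on (\<lambda>z. - int (p z)) {..<m}" using inj by (auto simp: inj_on_def)
  have "{z \<in> {..<m}. - int (p z) < - int (p y)} = {z. z < m \<and> p y < p z}" for y by auto
  then show ?thesis using card_low[OF _ inj', of i] unfolding above_def by simp
qed

definition mainp :: "nat \<Rightarrow> nat \<Rightarrow> nat \<Rightarrow> nat \<Rightarrow> nat list \<Rightarrow> nat prog" where
  "mainp m i j t xs = bindp (isort xs) (\<lambda>ys.
     bindp (cnt (ys ! t) (filter (\<lambda>y. y \<noteq> ys ! t) [0..<m])) (\<lambda>c.
       if j \<le> c \<and> i \<le> m - 1 - c then Ret (ys ! t) else mapp (\<lambda>L. L ! j) (isort [0..<m])))"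

lemma mainp_ok:
  assumes "set xs \<subseteq> {..<m}" "t < length xs" "j < m" "m \<le> n"
  shows "okp n (\<lambda>v. v < n) (mainp m i j t xs)"
  unfolding mainp_def
proof (rule okp_bind[OF isort_ok])
  show "set xs \<subseteq> {..<n}" using assms by auto
  fix ys assume ys: "mset ys = mset xs"
  then have yt: "ys ! t < m" using assms
    by (metis lessThan_iff nth_mem set_mset_mset size_mset subsetD)
  show "okp n (\<lambda>v. v < n) (bindp (cnt (ys ! t) (filter (\<lambda>y. y \<noteq> ys ! t) [0..<m]))
        (\<lambda>c. if j \<le> c \<and> i \<le> m - 1 - c then Ret (ys ! t) else mapp (\<lambda>L. L ! j) (isort [0..<m])))"
  proof (rule okp_bind[OF cnt_ok])
    show "ys ! t < n" using yt assms by simp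
    show "set (filter (\<lambda>y. y \<noteq> ys ! t) [0..<m]) \<subseteq> {..<n}" using assms by auto
    fix c
    show "okp n (\<lambda>v. v < n) (if j \<le> c \<and> i \<le> m - 1 - c then Ret (ys ! t) else mapp (\<lambda>L. L ! j) (isort [0..<m]))"
    proof (cases "j \<le> c \<and> i \<le> m - 1 - c")
      case True then show ?thesis using yt assms by simp
    next
      case False
      have "okp n (\<lambda>v. v < n) (mapp (\<lambda>L. L ! j) (isort [0..<m]))"
      proof (rule okp_mapp[OF isort_ok[of _ n]])
        show "set [0..<m] \<subseteq> {..<n}" using assms by auto
        fix L :: "nat list" assume L: "mset L = mset [0..<m]"
        then have "length L = m" by (metis length_upt minus_nat.diff_0 size_mset)
        moreover have "set L = {..<m}" using L by (metis atLeast_upt set_mset_mset)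
        ultimately show "L ! j < n" using assms by (metis lessThan_iff nth_mem order_less_le_trans)
      qed
      then show ?thesis unfolding if_not_P[OF False] .
    qed
  qed
qed

lemma cnt_below:
  assumes "x < m"
  shows "evalp (cnt x (filter (\<lambda>y. y \<noteq> x) [0..<m])) p = below p m x"
proof -
  have "evalp (cnt x (filter (\<lambda>y. y \<noteq> x) [0..<m])) p = length (filter (\<lambda>y. y \<noteq> x \<and> p y < p x) [0..<m])"
    by (simp add: cnt_eval filter_filter conj_commute)
  also have "\<dots> = card ({y. y \<noteq> x \<and> p y < p x} \<inter> set [0..<m])" by (rule distinct_length_filter) simp
  also have "{y. y \<noteq> x \<and> p y < p x} \<inter> set [0..<m] = {y. y < m \<and> p y < p x}" by auto
  finally show ?thesis by (simp add: below_def)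
qed

lemma mainp_correct:
  assumes bij: "bij_betw p {..<n} {..<n}" and xs: "set xs \<subseteq> {..<m}" "t < length xs"
    and ijm: "i + j < m" and mn: "m \<le> n"
  shows "mediocre i j (p ` {..<n}) (p (evalp (mainp m i j t xs) p))"
proof -
  have inj: "inj_on p {..<m}" using bij mn by (meson bij_betw_def inj_on_subset lessThan_subset_iff)
  define ys where "ys = evalp (isort xs) p"
  have ys: "mset ys = mset xs" using isort_eval unfolding ys_def by blast
  then have x: "ys ! t < m" using xs
    by (metis lessThan_iff nth_mem set_mset_mset size_mset subsetD)
  define c where "c = below p m (ys ! t)"
  have ba: "c + above p m (ys ! t) = m - 1" using below_above[OF inj x] c_def by simp
  show ?thesis
  proof (cases "j \<le> c \<and> i \<le> m - 1 - c")
    case True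
    then have "evalp (mainp m i j t xs) p = ys ! t"
      unfolding mainp_def by (simp add: ys_def[symmetric] cnt_below[OF x] c_def[symmetric])
    moreover have "i \<le> above p m (ys ! t)" using True ba by linarith
    moreover have "j \<le> below p m (ys ! t)" using True c_def by simp
    ultimately show ?thesis using good[OF bij x mn, of j i] by simp
  next
    case False
    define L where "L = evalp (isort [0..<m]) p"
    have L: "sortedp p L" "mset L = mset [0..<m]" using isort_eval unfolding L_def by blast+
    have dL: "distinct L" using L(2) by (metis distinct_upt mset_eq_imp_distinct_iff)
    have sL: "set L = {..<m}" using L(2) by (metis atLeast_upt set_mset_mset)
    have lL: "length L = m" using L(2) by (metis length_upt minus_nat.diff_0 size_mset)
    have "evalp (mainp m i j t xs) p = L ! j"
      unfolding mainp_def using False by (auto simp: ys_def[symmetric] cnt_below[OF x] c_def[symmetric] L_def)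
    moreover have "j \<le> below p m (L ! j) \<and> m - Suc j \<le> above p m (L ! j)"
      using sorted_rank[OF dL L(1) _ sL, of j] inj sL lL ijm by simp
    moreover have "L ! j < m"
    proof -
      have "j < length L" using lL ijm by simp
      then have "L ! j \<in> set L" by (rule nth_mem)
      then show ?thesis using sL by simp
    qed
    ultimately have "j \<le> below p m (L ! j)" "i \<le> above p m (L ! j)" "L ! j < m" "evalp (mainp m i j t xs) p = L ! j"
      using ijm by linarith+
    then show ?thesis using good[OF bij _ mn, of "L ! j" j i] by simp
  qed
qed



lemma replicate_pmf_map: "replicate_pmf n (map_pmf f q) = map_pmf (map f) (replicate_pmf n q)"
  by (induction n) (simp_all add: map_pmf_def bind_assoc_pmf bind_return_pmf)

lemma map_pmf_of_set_bern:
  assumes fin: "finite A" and ne: "A \<noteq> {}"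
  shows "map_pmf P (pmf_of_set A) = bernoulli_pmf (card {x\<in>A. P x} / card A)"
proof (rule pmf_eqI)
  fix b :: bool
  have cA: "card A > 0" using fin ne by (simp add: card_gt_0_iff)
  have le: "card {x\<in>A. P x} \<le> card A" using fin by (intro card_mono) auto
  have q01: "card {x\<in>A. P x} / card A \<in> {0..1}" using le cA by auto
  have "pmf (map_pmf P (pmf_of_set A)) b = measure (pmf_of_set A) (P -` {b})" by (simp add: pmf_map)
  also have "\<dots> = card (A \<inter> P -` {b}) / card A" using fin ne by (simp add: measure_pmf_of_set)
  finally have 1: "pmf (map_pmf P (pmf_of_set A)) b = card (A \<inter> P -` {b}) / card A" .
  show "pmf (map_pmf P (pmf_of_set A)) b = pmf (bernoulli_pmf (card {x\<in>A. P x} / card A)) b"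
  proof (cases b)
    case True
    have "A \<inter> P -` {b} = {x\<in>A. P x}" using True by auto
    then show ?thesis using 1 q01 True by simp
  next
    case False
    have "A \<inter> P -` {b} = A - {x\<in>A. P x}" using False by auto
    then have "card (A \<inter> P -` {b}) = card A - card {x\<in>A. P x}" using fin by (simp add: card_Diff_subset)
    then have "pmf (map_pmf P (pmf_of_set A)) b = 1 - card {x\<in>A. P x} / card A"
      using 1 cA le by (simp add: of_nat_diff diff_divide_distrib)
    then show ?thesis using q01 False by simp
  qed
qed

lemma count_binomial:
  assumes fin: "finite A" and ne: "A \<noteq> {}"
  shows "map_pmf (\<lambda>xs. length (filter P xs)) (replicate_pmf s (pmf_of_set A))
         = binomial_pmf s (card {x\<in>A. P x} / card A)"
proof -
  have cA: "card A > 0" using fin ne by (simp add: card_gt_0_iff)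
  have le: "card {x\<in>A. P x} \<le> card A" using fin by (intro card_mono) auto
  have q01: "card {x\<in>A. P x} / card A \<in> {0..1}" using le cA by auto
  have "binomial_pmf s (card {x\<in>A. P x} / card A)
      = map_pmf (length \<circ> filter id) (replicate_pmf s (map_pmf P (pmf_of_set A)))"
    by (subst binomial_pmf_altdef[OF q01]) (simp add: map_pmf_of_set_bern[OF fin ne])
  also have "\<dots> = map_pmf (\<lambda>xs. length (filter P xs)) (replicate_pmf s (pmf_of_set A))"
    by (simp add: replicate_pmf_map pmf.map_comp o_def filter_map)
  finally show ?thesis by simp
qed

lemma tail_bound:
  assumes fin: "finite A" and ne: "A \<noteq> {}" and c0: "card {x\<in>A. P x} \<le> c0"
    and s: "s > 0" and eps: "eps \<ge> 0" and a: "real a \<ge> real s * c0 / card A + eps"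
  shows "measure (replicate_pmf s (pmf_of_set A)) {xs. a \<le> length (filter P xs)} \<le> exp (-2 * eps\<^sup>2 / s)"
proof -
  define q where "q = card {x\<in>A. P x} / card A"
  have cA: "card A > 0" using fin ne by (simp add: card_gt_0_iff)
  have le: "card {x\<in>A. P x} \<le> card A" using fin by (intro card_mono) auto
  have q01: "q \<in> {0..1}" using le cA by (auto simp: q_def)
  interpret binomial_distribution s q by unfold_locales (rule q01)
  have "measure (replicate_pmf s (pmf_of_set A)) {xs. a \<le> length (filter P xs)}
      = measure (map_pmf (\<lambda>xs. length (filter P xs)) (replicate_pmf s (pmf_of_set A))) {x. a \<le> x}"
    by simp
  also have "\<dots> = measure (binomial_pmf s q) {x. a \<le> x}" by (simp add: count_binomial[OF fin ne] q_def)
  finally have 1: "measure (replicate_pmf s (pmf_of_set A)) {xs. a \<le> length (filter P xs)} = measure (binomial_pmf s q) {x. a \<le> x}" .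
  define e' where "e' = real a - real s * q"
  have "real s * q \<le> real s * c0 / card A"
    using c0 cA unfolding q_def by (simp only: times_divide_eq_right[symmetric]) (intro divide_right_mono mult_left_mono, auto)
  then have e': "e' \<ge> eps" using a unfolding e'_def by simp
  have "{x. a \<le> x} = {x. real s * q + e' \<le> real x}" unfolding e'_def by auto
  then have "measure (binomial_pmf s q) {x. a \<le> x} \<le> exp (- 2 * e'\<^sup>2 / real s)"
    using prob_ge[OF s, of e'] e' eps by simp
  also have "\<dots> \<le> exp (-2 * eps\<^sup>2 / s)"
    using e' eps s by (simp add: divide_right_mono power_mono)
  finally show ?thesis using 1 by simp
qed

lemma branch:
  assumes ys: "sortedp p ys" "mset ys = mset xs" and t: "t < length xs"
    and c1: "length (filter (\<lambda>y. below p m y < j) xs) \<le> t"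
    and c2: "length (filter (\<lambda>y. above p m y < i) xs) < length xs - t"
  shows "j \<le> below p m (ys ! t) \<and> i \<le> above p m (ys ! t)"
proof -
  have ly: "length ys = length xs" using ys(2) by (metis size_mset)
  have fl: "length (filter P ys) = length (filter P xs)" for P
    using ys(2) by (metis mset_filter size_mset)
  have mono: "p (ys ! a) \<le> p (ys ! b)" if "a \<le> b" "b < length ys" for a b
    using ys(1) that by (cases "a = b") (auto simp: sorted_wrt_iff_nth_less)
  have A: "j \<le> below p m (ys ! t)"
  proof (rule ccontr)
    assume "\<not> j \<le> below p m (ys ! t)"
    then have lt: "below p m (ys ! t) < j" by simp
    have "{..t} \<subseteq> {l. l < length ys \<and> below p m (ys ! l) < j}"
    proof
      fix l assume "l \<in> {..t}"
      then have l: "l \<le> t" by simp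
      have "{y. y < m \<and> p y < p (ys ! l)} \<subseteq> {y. y < m \<and> p y < p (ys ! t)}"
        using mono[OF l] t ly by auto
      then have "below p m (ys ! l) \<le> below p m (ys ! t)" unfolding below_def by (intro card_mono) auto
      then show "l \<in> {l. l < length ys \<and> below p m (ys ! l) < j}" using lt l t ly by auto
    qed
    then have "card {..t} \<le> card {l. l < length ys \<and> below p m (ys ! l) < j}" by (intro card_mono) auto
    also have "\<dots> = length (filter (\<lambda>y. below p m y < j) ys)" by (simp add: length_filter_conv_card)
    finally show False using c1 fl by simp
  qed
  have B: "i \<le> above p m (ys ! t)"
  proof (rule ccontr)
    assume "\<not> i \<le> above p m (ys ! t)"
    then have lt: "above p m (ys ! t) < i" by simp
    have "{t..<length ys} \<subseteq> {l. l < length ys \<and> above p m (ys ! l) < i}"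
    proof
      fix l assume "l \<in> {t..<length ys}"
      then have l: "t \<le> l" "l < length ys" by auto
      have "{y. y < m \<and> p (ys ! l) < p y} \<subseteq> {y. y < m \<and> p (ys ! t) < p y}"
        using mono[OF l] by auto
      then have "above p m (ys ! l) \<le> above p m (ys ! t)" unfolding above_def by (intro card_mono) auto
      then show "l \<in> {l. l < length ys \<and> above p m (ys ! l) < i}" using lt l by auto
    qed
    then have "card {t..<length ys} \<le> card {l. l < length ys \<and> above p m (ys ! l) < i}" by (intro card_mono) auto
    also have "\<dots> = length (filter (\<lambda>y. above p m y < i) ys)" by (simp add: length_filter_conv_card)
    finally show False using c2 fl ly by simp
  qed
  show ?thesis using A B by simp
qed

definition bad :: "(nat \<Rightarrow> nat) \<Rightarrow> nat \<Rightarrow> nat \<Rightarrow> nat \<Rightarrow> nat \<Rightarrow> nat \<Rightarrow> nat list set" where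
  "bad p m i j s t = {xs. t + 1 \<le> length (filter (\<lambda>y. below p m y < j) xs)} \<union>
                     {xs. s - t \<le> length (filter (\<lambda>y. above p m y < i) xs)}"

lemma mainp_cost:
  assumes inj: "inj_on p {..<m}" and xs: "set xs \<subseteq> {..<m}" "length xs = s" and t: "t < s"
  shows "costp (mainp m i j t xs) p \<le> s * clog s + m + (if xs \<in> bad p m i j s t then m * clog m else 0)"
proof -
  define ys where "ys = evalp (isort xs) p"
  have ys: "sortedp p ys" "mset ys = mset xs" using isort_eval unfolding ys_def by blast+
  then have x: "ys ! t < m" using xs t
    by (metis lessThan_iff nth_mem set_mset_mset size_mset subsetD)
  define c where "c = below p m (ys ! t)"
  have ba: "c + above p m (ys ! t) = m - 1" using below_above[OF inj x] c_def by simp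
  have c1: "costp (isort xs) p \<le> s * clog s" using isort_cost[of xs p] xs by simp
  have c2: "costp (cnt (ys ! t) (filter (\<lambda>y. y \<noteq> ys ! t) [0..<m])) p \<le> m"
    unfolding cnt_cost by (metis length_filter_le length_upt minus_nat.diff_0)
  have c3: "costp (mapp (\<lambda>L. L ! j) (isort [0..<m])) p \<le> m * clog m" using isort_cost[of "[0..<m]" p] by simp
  have eq: "costp (mainp m i j t xs) p = costp (isort xs) p + (costp (cnt (ys ! t) (filter (\<lambda>y. y \<noteq> ys ! t) [0..<m])) p
      + (if j \<le> c \<and> i \<le> m - 1 - c then 0 else costp (mapp (\<lambda>L. L ! j) (isort [0..<m])) p))"
    unfolding mainp_def by (simp add: ys_def[symmetric] cnt_below[OF x] c_def[symmetric])
  show ?thesis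
  proof (cases "xs \<in> bad p m i j s t")
    case True
    then show ?thesis using eq c1 c2 c3 by (simp split: if_splits)
  next
    case False
    then have "length (filter (\<lambda>y. below p m y < j) xs) \<le> t" "length (filter (\<lambda>y. above p m y < i) xs) < length xs - t"
      unfolding bad_def using xs by auto
    from branch[OF ys _ this] xs t have "j \<le> c \<and> i \<le> above p m (ys ! t)" unfolding c_def by simp
    then have "j \<le> c \<and> i \<le> m - 1 - c" using ba by linarith
    then show ?thesis using eq c1 c2 False by simp
  qed
qed



lemma clog_pow: "L \<ge> 1 \<Longrightarrow> (2::nat) ^ clog L \<le> 2 * L"
proof (induction L rule: less_induct)
  case (less L)
  show ?case
  proof (cases "L = 1")
    case True then show ?thesis by (simp add: clog.simps)
  next
    case False
    then have "L div 2 \<ge> 1" "L div 2 < L" using less.prems by auto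
    then have "(2::nat) ^ clog (L div 2) \<le> 2 * (L div 2)" using less.IH by blast
    moreover have "clog L = Suc (clog (L div 2))" using less.prems by (simp add: clog.simps)
    ultimately show ?thesis by simp
  qed
qed

lemma clog_le: "L \<ge> 1 \<Longrightarrow> real (clog L) \<le> log 2 (real L) + 1"
proof -
  assume L: "L \<ge> 1"
  have "real ((2::nat) ^ clog L) \<le> real (2 * L)" using clog_pow[OF L] by linarith
  then have "(2::real) powr real (clog L) \<le> 2 * real L" by (simp add: powr_realpow)
  then have "log 2 ((2::real) powr real (clog L)) \<le> log 2 (2 * real L)"
    using L by (subst log_le_cancel_iff) auto
  then show ?thesis using L by (simp add: log_mult)
qed

lemma phi_mono: "1 \<le> (x::real) \<Longrightarrow> x \<le> y \<Longrightarrow> x * (log 2 x + 1) \<le> y * (log 2 y + 1)"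
  by (intro mult_mono) auto

lemma ev_bound: "eventually (\<lambda>K::real. (K powr (5/8)+1)*(log 2 (K powr (5/8)+1) + 1) + (K + K powr (3/4) + 1)
   + ((K + K powr (3/4) + 1)*(log 2 (K + K powr (3/4) + 1) + 1)) * (2 * exp (- (K powr (5/8) * (K powr (3/4) - 1)^2 / (2*(K + K powr (3/4) + 1)^2))))
   \<le> K + 3 * K powr (3/4)) at_top"
  unfolding log_def by real_asymp


lemma expected:
  assumes inj: "inj_on p {..<m}" and t: "t < s" and m: "0 < m"
  shows "(\<integral>\<^sup>+ xs. ennreal (real (costp (mainp m i j t xs) p)) \<partial>measure_pmf (replicate_pmf s (pmf_of_set {..<m})))
    \<le> ennreal (real (s * clog s + m) + real (m * clog m) * measure (replicate_pmf s (pmf_of_set {..<m})) (bad p m i j s t))"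
proof -
  define R where "R = replicate_pmf s (pmf_of_set {..<m})"
  define a where "a = real (s * clog s + m)"
  define b where "b = real (m * clog m)"
  have sR: "set xs \<subseteq> {..<m} \<and> length xs = s" if "xs \<in> set_pmf R" for xs
  proof -
    have U: "set_pmf (pmf_of_set {..<m}) = {..<m}" using m by (intro set_pmf_of_set) auto
    show ?thesis using that unfolding R_def by (auto simp: set_replicate_pmf U)
  qed
  have "(\<integral>\<^sup>+ xs. ennreal (real (costp (mainp m i j t xs) p)) \<partial>measure_pmf R)
      \<le> (\<integral>\<^sup>+ xs. (ennreal a + ennreal b * indicator (bad p m i j s t) xs) \<partial>measure_pmf R)"
  proof (rule nn_integral_mono_AE, rule AE_pmfI)
    fix xs assume "xs \<in> set_pmf R"
    then have c: "costp (mainp m i j t xs) p \<le> s * clog s + m + (if xs \<in> bad p m i j s t then m * clog m else 0)"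
      using mainp_cost[OF inj _ _ t] sR by blast
    show "ennreal (real (costp (mainp m i j t xs) p)) \<le> ennreal a + ennreal b * indicator (bad p m i j s t) xs"
    proof (cases "xs \<in> bad p m i j s t")
      case True
      have "real (costp (mainp m i j t xs) p) \<le> real (s * clog s + m + m * clog m)"
        by (rule of_nat_mono) (use c True in simp)
      then have "real (costp (mainp m i j t xs) p) \<le> a + b" unfolding a_def b_def by simp
      then show ?thesis using True unfolding a_def b_def by (simp add: ennreal_plus[symmetric] del: ennreal_plus ennreal_of_nat_eq_real_of_nat)
    next
      case False
      have "real (costp (mainp m i j t xs) p) \<le> real (s * clog s + m)"
        by (rule of_nat_mono) (use c False in simp)
      then have "real (costp (mainp m i j t xs) p) \<le> a" unfolding a_def by simp
      then show ?thesis using False by simp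
    qed
  qed
  also have "\<dots> = ennreal a + ennreal b * emeasure (measure_pmf R) (bad p m i j s t)"
    by (subst nn_integral_add) (simp_all add: nn_integral_cmult_indicator measure_pmf.emeasure_space_1)
  also have "\<dots> = ennreal (a + b * measure (measure_pmf R) (bad p m i j s t))"
    by (simp add: measure_pmf.emeasure_eq_measure a_def b_def ennreal_plus ennreal_mult)
  finally show ?thesis unfolding R_def a_def b_def .
qed



definition gg :: "nat \<Rightarrow> nat" where "gg k = nat \<lfloor>real k powr (3/4)\<rfloor>"
definition ss :: "nat \<Rightarrow> nat" where "ss k = nat \<lceil>real k powr (5/8)\<rceil>"
definition mm :: "nat \<Rightarrow> nat \<Rightarrow> nat" where "mm i j = i + j + 1 + gg (i + j)"
definition tt :: "nat \<Rightarrow> nat \<Rightarrow> nat" where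
  "tt i j = nat \<lfloor>real (ss (i+j)) * (real j + real (gg (i+j)) / 2) / real (mm i j)\<rfloor>"

definition Alg :: "nat \<Rightarrow> nat \<Rightarrow> nat \<Rightarrow> dtree pmf" where
  "Alg n i j = (if 1 \<le> i \<and> 1 \<le> j \<and> real (i + j) + 2 * real (i + j) powr (3/4) \<le> real n
     then map_pmf (\<lambda>xs. todt (mainp (mm i j) i j (tt i j) xs)) (replicate_pmf (ss (i+j)) (pmf_of_set {..<mm i j}))
     else return_pmf (Leaf 0))"

lemma gg_bounds: "real (gg k) \<le> real k powr (3/4)" "real (gg k) \<ge> real k powr (3/4) - 1"
proof -
  have "real (gg k) = of_int \<lfloor>real k powr (3/4)\<rfloor>" unfolding gg_def by simp
  then show "real (gg k) \<le> real k powr (3/4)" "real (gg k) \<ge> real k powr (3/4) - 1"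
    by (simp_all add: of_int_floor_le)
qed

lemma ss_bounds: "real (ss k) \<ge> real k powr (5/8)" "real (ss k) \<le> real k powr (5/8) + 1"
proof -
  have "real (ss k) = of_int \<lceil>real k powr (5/8)\<rceil>" unfolding ss_def by simp
  then show "real (ss k) \<ge> real k powr (5/8)" "real (ss k) \<le> real k powr (5/8) + 1"
    by (simp_all add: le_of_int_ceiling)
qed

lemma params:
  assumes i: "1 \<le> i" and j: "1 \<le> j" and n: "real (i+j) + 2 * real (i+j) powr (3/4) \<le> real n"
  shows "mm i j \<le> n" "i + j < mm i j" "0 < ss (i+j)" "tt i j < ss (i+j)"
    "real (tt i j) + 1 \<ge> real (ss (i+j)) * (real j + real (gg (i+j)) / 2) / real (mm i j)"
    "real (tt i j) \<le> real (ss (i+j)) * (real j + real (gg (i+j)) / 2) / real (mm i j)"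
proof -
  have K1: "1 \<le> real (i+j) powr (3/4)" by (rule ge_one_powr_ge_zero) (use i in auto)
  have K2: "1 \<le> real (i+j) powr (5/8)" by (rule ge_one_powr_ge_zero) (use i in auto)
  have "real (mm i j) \<le> real n" unfolding mm_def using gg_bounds(1)[of "i+j"] K1 n by simp
  then show "mm i j \<le> n" by simp
  show "i + j < mm i j" unfolding mm_def by simp
  show s0: "0 < ss (i+j)" using ss_bounds(1)[of "i+j"] K2 by simp
  define v where "v = real (ss (i+j)) * (real j + real (gg (i+j)) / 2) / real (mm i j)"
  have v0: "0 \<le> v" unfolding v_def by simp
  have "(real j + real (gg (i+j)) / 2) < real (mm i j)" unfolding mm_def by simp
  then have "(real j + real (gg (i+j)) / 2) / real (mm i j) < 1" by (simp add: mm_def)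
  then have vs: "v < real (ss (i+j))" unfolding v_def using s0
    by (metis mult.right_neutral mult_strict_left_mono of_nat_0_less_iff times_divide_eq_right)
  have tv: "real (tt i j) = of_int \<lfloor>v\<rfloor>" unfolding tt_def v_def[symmetric] using v0 by simp
  show "tt i j < ss (i+j)" using tv vs by (metis floor_le_iff less_le_not_le of_int_floor_le of_nat_less_iff order.strict_trans1)
  show "real (tt i j) + 1 \<ge> real (ss (i+j)) * (real j + real (gg (i+j)) / 2) / real (mm i j)"
    using tv v_def by linarith
  show "real (tt i j) \<le> real (ss (i+j)) * (real j + real (gg (i+j)) / 2) / real (mm i j)"
    using tv v_def by linarith
qed



lemma bad_prob:
  assumes inj: "inj_on p {..<mm i j}" and i: "1 \<le> i" and j: "1 \<le> j"
    and n: "real (i+j) + 2 * real (i+j) powr (3/4) \<le> real n"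
  defines "s \<equiv> ss (i+j)" and "m \<equiv> mm i j" and "t \<equiv> tt i j" and "g \<equiv> gg (i+j)"
  shows "measure (replicate_pmf s (pmf_of_set {..<m})) (bad p m i j s t)
         \<le> 2 * exp (-2 * (real s * real g / (2 * real m))\<^sup>2 / real s)"
proof -
  note P = params[OF i j n, folded s_def m_def t_def g_def]
  define eps where "eps = real s * real g / (2 * real m)"
  have eps0: "eps \<ge> 0" unfolding eps_def by simp
  have m0: "m > 0" using P(2) by simp
  define R where "R = replicate_pmf s (pmf_of_set {..<m})"
  define E1 where "E1 = {xs. t + 1 \<le> length (filter (\<lambda>y. below p m y < j) xs)}"
  define E2 where "E2 = {xs. s - t \<le> length (filter (\<lambda>y. above p m y < i) xs)}"
  have "measure R (bad p m i j s t) \<le> measure R E1 + measure R E2"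
    unfolding bad_def E1_def E2_def by (rule measure_Un_le) auto
  moreover have "measure R E1 \<le> exp (-2 * eps\<^sup>2 / real s)"
    unfolding R_def E1_def
  proof (rule tail_bound[of _ _ j])
    show "card {x \<in> {..<m}. below p m x < j} \<le> j" using card_lowP[OF inj[folded m_def]] .
    have "real s * real j / real (card {..<m}) + eps = real s * (real j + real g / 2) / real m"
      unfolding eps_def using m0 by (simp add: field_simps)
    then show "real s * real j / real (card {..<m}) + eps \<le> real (t + 1)" using P(5) by simp
  qed (use m0 P(3) eps0 in auto)
  moreover have "measure R E2 \<le> exp (-2 * eps\<^sup>2 / real s)"
    unfolding R_def E2_def
  proof (rule tail_bound[of _ _ i])
    show "card {x \<in> {..<m}. above p m x < i} \<le> i" using card_highP[OF inj[folded m_def]] .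
    have mdef: "real m = real i + real j + 1 + real g" unfolding m_def mm_def g_def by simp
    have e1: "real s * real i / real (card {..<m}) + eps = real s * (real i + real g / 2) / real m"
      unfolding eps_def using m0 by (simp add: field_simps)
    have e2: "real s - real s * (real j + real g / 2) / real m = real s * (real i + 1 + real g / 2) / real m"
      using m0 by (simp add: field_simps mdef)
    have "real s * (real i + real g / 2) / real m \<le> real s * (real i + 1 + real g / 2) / real m"
      by (intro divide_right_mono mult_left_mono) auto
    then have "real s * real i / real (card {..<m}) + eps \<le> real s - real s * (real j + real g / 2) / real m"
      using e1 e2 by simp
    also have "\<dots> \<le> real s - real t" using P(6) by simp
    also have "\<dots> = real (s - t)" using P(4) by simp
    finally show "real s * real i / real (card {..<m}) + eps \<le> real (s - t)" .
  qed (use m0 P(3) eps0 in auto)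
  ultimately show ?thesis unfolding R_def eps_def by simp
qed



definition Qb :: "real \<Rightarrow> bool" where
  "Qb K \<longleftrightarrow> (K powr (5/8)+1)*(log 2 (K powr (5/8)+1) + 1) + (K + K powr (3/4) + 1)
   + ((K + K powr (3/4) + 1)*(log 2 (K + K powr (3/4) + 1) + 1)) * (2 * exp (- (K powr (5/8) * (K powr (3/4) - 1)^2 / (2*(K + K powr (3/4) + 1)^2))))
   \<le> K + 3 * K powr (3/4)"

lemma real_bound:
  assumes i: "1 \<le> i" and j: "1 \<le> j" and n: "real (i+j) + 2 * real (i+j) powr (3/4) \<le> real n"
    and Q: "Qb (real (i+j))"
  defines "s \<equiv> ss (i+j)" and "m \<equiv> mm i j" and "g \<equiv> gg (i+j)"
  shows "real (s * clog s + m) + real (m * clog m) * (2 * exp (-2 * (real s * real g / (2 * real m))\<^sup>2 / real s))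
         \<le> real (i+j) + 3 * real (i+j) powr (3/4)"
proof -
  note P = params[OF i j n, folded s_def m_def g_def]
  define K where "K = real (i+j)"
  have K1: "1 \<le> K powr (3/4)" unfolding K_def by (rule ge_one_powr_ge_zero) (use i in auto)
  have K2: "1 \<le> K powr (5/8)" unfolding K_def by (rule ge_one_powr_ge_zero) (use i in auto)
  define M where "M = K + K powr (3/4) + 1"
  have s1: "1 \<le> real s" using P(3) by simp
  have s2: "real s \<le> K powr (5/8) + 1" using ss_bounds(2)[of "i+j"] unfolding s_def K_def by simp
  have s3: "K powr (5/8) \<le> real s" using ss_bounds(1)[of "i+j"] unfolding s_def K_def by simp
  have g1: "real g \<le> K powr (3/4)" "K powr (3/4) - 1 \<le> real g" using gg_bounds[of "i+j"] unfolding g_def K_def by simp_all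
  have mdef: "real m = K + 1 + real g" unfolding m_def mm_def g_def K_def by simp
  have m1: "1 \<le> real m" using mdef unfolding K_def by simp
  have m2: "real m \<le> M" using mdef g1 unfolding M_def by simp
  have A1: "real (s * clog s) \<le> (K powr (5/8)+1)*(log 2 (K powr (5/8)+1) + 1)"
  proof -
    have "real (s * clog s) = real s * real (clog s)" by simp
    also have "\<dots> \<le> real s * (log 2 (real s) + 1)" using clog_le[of s] s1 by (intro mult_left_mono) auto
    also have "\<dots> \<le> (K powr (5/8)+1)*(log 2 (K powr (5/8)+1) + 1)" by (rule phi_mono[OF s1 s2])
    finally show ?thesis .
  qed
  have A2: "real (m * clog m) \<le> M * (log 2 M + 1)"
  proof -
    have "real (m * clog m) = real m * real (clog m)" by simp
    also have "\<dots> \<le> real m * (log 2 (real m) + 1)" using clog_le[of m] m1 by (intro mult_left_mono) auto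
    also have "\<dots> \<le> M * (log 2 M + 1)" by (rule phi_mono[OF m1 m2])
    finally show ?thesis .
  qed
  define eps where "eps = real s * real g / (2 * real m)"
  have e1: "2 * eps\<^sup>2 / real s = real s * (real g)\<^sup>2 / (2 * (real m)\<^sup>2)"
    unfolding eps_def using s1 m1 by (simp add: field_simps power2_eq_square)
  have e2: "K powr (5/8) * (K powr (3/4) - 1)^2 / (2 * M^2) \<le> real s * (real g)\<^sup>2 / (2 * (real m)\<^sup>2)"
  proof (rule frac_le)
    show "0 \<le> real s * (real g)\<^sup>2" by simp
    show "K powr (5/8) * (K powr (3/4) - 1)^2 \<le> real s * (real g)\<^sup>2"
      using s3 g1 K1 by (intro mult_mono power_mono) auto
    show "0 < 2 * (real m)\<^sup>2" using m1 by simp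
    show "2 * (real m)\<^sup>2 \<le> 2 * M^2" using m1 m2 by (simp add: power_mono)
  qed
  have E: "exp (-2 * eps\<^sup>2 / real s) \<le> exp (- (K powr (5/8) * (K powr (3/4) - 1)^2 / (2*M^2)))"
    using e1 e2 by simp
  have B: "real (m * clog m) * (2 * exp (-2 * eps\<^sup>2 / real s))
      \<le> (M * (log 2 M + 1)) * (2 * exp (- (K powr (5/8) * (K powr (3/4) - 1)^2 / (2*M^2))))"
  proof -
    have M1: "1 \<le> M" using m1 m2 by simp
    then have "0 \<le> log 2 M" by simp
    then have Mn: "0 \<le> M * (log 2 M + 1)" using M1 by (intro mult_nonneg_nonneg) auto
    show ?thesis by (rule mult_mono[OF A2 _ Mn]) (use E in auto)
  qed
  have "real (s * clog s + m) + real (m * clog m) * (2 * exp (-2 * eps\<^sup>2 / real s))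
      \<le> (K powr (5/8)+1)*(log 2 (K powr (5/8)+1) + 1) + M
         + (M * (log 2 M + 1)) * (2 * exp (- (K powr (5/8) * (K powr (3/4) - 1)^2 / (2*M^2))))"
    using A1 B m2 by simp
  also have "\<dots> \<le> K + 3 * K powr (3/4)" using Q unfolding Qb_def M_def K_def by simp
  finally show ?thesis unfolding eps_def K_def .
qed



lemma Alg_correct:
  assumes i: "1 \<le> i" and j: "1 \<le> j" and n: "real (i + j) + 2 * real (i + j) powr (3/4) \<le> real n"
    and T: "T \<in> set_pmf (Alg n i j)"
  shows "wf_tree n T \<and> (\<forall>p. bij_betw p {..<n} {..<n} \<longrightarrow> mediocre i j (p ` {..<n}) (p (run T p)))"
proof -
  note P = params[OF i j n]
  have U: "set_pmf (pmf_of_set {..<mm i j}) = {..<mm i j}" using P(2) by (intro set_pmf_of_set) auto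
  from T obtain xs where xs: "xs \<in> set_pmf (replicate_pmf (ss (i+j)) (pmf_of_set {..<mm i j}))"
    and Tx: "T = todt (mainp (mm i j) i j (tt i j) xs)"
    unfolding Alg_def using i j n by auto
  have xs2: "set xs \<subseteq> {..<mm i j}" "length xs = ss (i+j)" using xs by (auto simp: set_replicate_pmf U)
  have "wf_tree n T" unfolding Tx
    by (rule wf_todt, rule mainp_ok) (use xs2 P in auto)
  moreover have "mediocre i j (p ` {..<n}) (p (run T p))" if "bij_betw p {..<n} {..<n}" for p
    unfolding Tx run_todt by (rule mainp_correct[OF that]) (use xs2 P in auto)
  ultimately show ?thesis by blast
qed

lemma Alg_cost:
  assumes i: "1 \<le> i" and j: "1 \<le> j" and n: "real (i + j) + 2 * real (i + j) powr (3/4) \<le> real n"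
    and Q: "Qb (real (i+j))" and bij: "bij_betw p {..<n} {..<n}"
  shows "(\<integral>\<^sup>+ T. ennreal (real (cost T p)) \<partial>(measure_pmf (Alg n i j)))
          \<le> ennreal (real (i + j) + 3 * real (i + j) powr (3/4))"
proof -
  note P = params[OF i j n]
  have inj: "inj_on p {..<mm i j}" using bij P(1) by (meson bij_betw_def inj_on_subset lessThan_subset_iff)
  define R where "R = replicate_pmf (ss (i+j)) (pmf_of_set {..<mm i j})"
  have "(\<integral>\<^sup>+ T. ennreal (real (cost T p)) \<partial>(measure_pmf (Alg n i j)))
      = (\<integral>\<^sup>+ xs. ennreal (real (costp (mainp (mm i j) i j (tt i j) xs) p)) \<partial>measure_pmf R)"
    unfolding Alg_def R_def using i j n by simp
  also have "\<dots> \<le> ennreal (real (ss (i+j) * clog (ss (i+j)) + mm i j) + real (mm i j * clog (mm i j))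
        * measure R (bad p (mm i j) i j (ss (i+j)) (tt i j)))"
    unfolding R_def by (rule expected[OF inj P(4)]) (use P(2) in simp)
  also have "\<dots> \<le> ennreal (real (ss (i+j) * clog (ss (i+j)) + mm i j) + real (mm i j * clog (mm i j))
        * (2 * exp (-2 * (real (ss (i+j)) * real (gg (i+j)) / (2 * real (mm i j)))\<^sup>2 / real (ss (i+j)))))"
    unfolding R_def by (intro ennreal_leI add_left_mono mult_left_mono bad_prob[OF inj i j n]) simp
  also have "\<dots> \<le> ennreal (real (i + j) + 3 * real (i + j) powr (3/4))"
    by (intro ennreal_leI real_bound[OF i j n Q])
  finally show ?thesis .
qed

theorem theorem2:
  "\<exists>A :: nat \<Rightarrow> nat \<Rightarrow> nat \<Rightarrow> dtree pmf.
     (\<forall>n i j. 1 \<le> i \<and> 1 \<le> j \<and> real (i + j) + 2 * real (i + j) powr (3/4) \<le> real n \<longrightarrow>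
        (\<forall>T \<in> set_pmf (A n i j). wf_tree n T \<and>
           (\<forall>p. bij_betw p {..<n} {..<n} \<longrightarrow> mediocre i j (p ` {..<n}) (p (run T p))))) \<and>
     (\<exists>C N. \<forall>n i j p. 1 \<le> i \<and> 1 \<le> j \<and> real (i + j) + 2 * real (i + j) powr (3/4) \<le> real n
        \<and> N \<le> i + j \<and> bij_betw p {..<n} {..<n} \<longrightarrow>
        (\<integral>\<^sup>+ T. ennreal (real (cost T p)) \<partial>(measure_pmf (A n i j)))
          \<le> ennreal (real (i + j) + C * real (i + j) powr (3/4)))"
proof -
  have "eventually Qb at_top" unfolding Qb_def by (rule ev_bound)
  then obtain N0 where N0: "\<And>K. K \<ge> N0 \<Longrightarrow> Qb K" unfolding eventually_at_top_linorder by blast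
  show ?thesis
  proof (rule exI[of _ Alg], rule conjI)
    show "\<forall>n i j. 1 \<le> i \<and> 1 \<le> j \<and> real (i + j) + 2 * real (i + j) powr (3/4) \<le> real n \<longrightarrow>
        (\<forall>T \<in> set_pmf (Alg n i j). wf_tree n T \<and>
           (\<forall>p. bij_betw p {..<n} {..<n} \<longrightarrow> mediocre i j (p ` {..<n}) (p (run T p))))"
      using Alg_correct by blast
  next
    show "\<exists>C N. \<forall>n i j p. 1 \<le> i \<and> 1 \<le> j \<and> real (i + j) + 2 * real (i + j) powr (3/4) \<le> real n
        \<and> N \<le> i + j \<and> bij_betw p {..<n} {..<n} \<longrightarrow>
        (\<integral>\<^sup>+ T. ennreal (real (cost T p)) \<partial>(measure_pmf (Alg n i j)))
          \<le> ennreal (real (i + j) + C * real (i + j) powr (3/4))"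
    proof (rule exI[of _ 3], rule exI[of _ "nat \<lceil>N0\<rceil>"], intro allI impI)
      fix n i j p
      assume a: "1 \<le> i \<and> 1 \<le> j \<and> real (i + j) + 2 * real (i + j) powr (3/4) \<le> real n
        \<and> nat \<lceil>N0\<rceil> \<le> i + j \<and> bij_betw p {..<n} {..<n}"
      have "real (i + j) \<ge> N0" using a by linarith
      then have "Qb (real (i+j))" by (rule N0)
      then show "(\<integral>\<^sup>+ T. ennreal (real (cost T p)) \<partial>(measure_pmf (Alg n i j)))
          \<le> ennreal (real (i + j) + 3 * real (i + j) powr (3/4))"
        using Alg_cost a by blast
    qed
  qed
qed

end
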